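(* Let $(\mathbb R/\pi\mathbb Z)^3_{\rm reg}=\{(\alpha,\beta,\gamma)\in(\mathbb R/\pi\mathbb Z)^3:\sin2\beta\neq0\}$ and $U=\{a\in\mathcal A_2:|a|=1\}\setminus(\mathcal A_1e_2\cup\mathcal A_1)$. The map $$\Psi:(\mathbb R/\pi\mathbb Z)^3_{\rm reg}\to U/\{\pm1\},\qquad(\alpha,\beta,\gamma)\mapsto\pm\exp(\alpha e_1)\exp(\beta e_1e_2)\exp(\gamma e_1)$$ is a two-fold covering map; explicitly $\Psi^{-1}(\Psi(\alpha,\beta,\gamma))=\{(\alpha,\beta,\gamma),(\alpha+\tfrac12\pi,-\beta,\gamma+\tfrac12\pi)\}$.
   Context: $\mathcal A_2$ is the real associative algebra generated by $e_1,e_2$ with $e_1^2=e_2^2=-1$, $e_1e_2=-e_2e_1$, with Euclidean norm in the basis $1,e_1,e_2,e_1e_2$; $\exp x=\sum_{m\ge0}x^m/m!$. $\mathcal A_1=\mathbb R+\mathbb Re_1$ and $\mathcal A_1e_2=\mathbb Re_2+\mathbb Re_1e_2$. *)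

theory Defs
  imports "HOL-Analysis.Analysis"
begin

text \<open>Elements of A_2 are represented as vectors in real^4 with respect to the basis
  1, e1, e2, e1e2 (components 1,2,3,4); the norm of real^4 is the Euclidean norm
  in this basis.  The product is determined by e1^2 = e2^2 = -1, e1 e2 = - e2 e1.\<close>

type_synonym A2 = "real^4"

definition A2mult :: "A2 \<Rightarrow> A2 \<Rightarrow> A2" where
  "A2mult x y = vector [
     x$1*y$1 - x$2*y$2 - x$3*y$3 - x$4*y$4,
     x$1*y$2 + x$2*y$1 + x$3*y$4 - x$4*y$3,
     x$1*y$3 - x$2*y$4 + x$3*y$1 + x$4*y$2,
     x$1*y$4 + x$2*y$3 - x$3*y$2 + x$4*y$1]"

definition A2one :: A2 where "A2one = vector [1, 0, 0, 0]"
definition e1 :: A2 where "e1 = vector [0, 1, 0, 0]"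
definition e2 :: A2 where "e2 = vector [0, 0, 1, 0]"
definition e12 :: A2 where "e12 = vector [0, 0, 0, 1]"

primrec A2pow :: "A2 \<Rightarrow> nat \<Rightarrow> A2" where
  "A2pow x 0 = A2one"
| "A2pow x (Suc m) = A2mult x (A2pow x m)"

definition A2exp :: "A2 \<Rightarrow> A2" where
  "A2exp x = (\<Sum>m. (1 / fact m) *\<^sub>R A2pow x m)"

definition A1 :: "A2 set" where "A1 = {r *\<^sub>R A2one + s *\<^sub>R e1 | r s. True}"
definition A1e2 :: "A2 set" where "A1e2 = {r *\<^sub>R e2 + s *\<^sub>R e12 | r s. True}"

definition Uset :: "A2 set" where
  "Uset = {a. norm a = 1} - (A1e2 \<union> A1)"

definition quot_top :: "'a topology \<Rightarrow> 'a rel \<Rightarrow> 'a set topology" where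
  "quot_top X r = topology (\<lambda>W. W \<subseteq> topspace X // r \<and> openin X (\<Union>W))"

definition covering_map :: "'a topology \<Rightarrow> 'b topology \<Rightarrow> ('a \<Rightarrow> 'b) \<Rightarrow> bool" where
  "covering_map X Y p \<longleftrightarrow>
     continuous_map X Y p \<and> p ` topspace X = topspace Y \<and>
     (\<forall>y \<in> topspace Y. \<exists>T. y \<in> T \<and> openin Y T \<and>
        (\<exists>V. \<Union>V = {x \<in> topspace X. p x \<in> T} \<and>
             (\<forall>u \<in> V. openin X u) \<and> pairwise disjnt V \<and>
             (\<forall>u \<in> V. homeomorphic_map (subtopology X u) (subtopology Y T) p)))"

definition two_fold_covering_map :: "'a topology \<Rightarrow> 'b topology \<Rightarrow> ('a \<Rightarrow> 'b) \<Rightarrow> bool" where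
  "two_fold_covering_map X Y p \<longleftrightarrow> covering_map X Y p \<and>
     (\<forall>y \<in> topspace Y. card {x \<in> topspace X. p x = y} = 2)"

text \<open>Representatives (alpha,beta,gamma) in R^3 with sin 2 beta \<noteq> 0; (R/piZ)^3_reg is
  the quotient of this (saturated, open) set by translations in (pi Z)^3.\<close>
definition Reg :: "(real \<times> real \<times> real) set" where
  "Reg = {(a, b, c). sin (2 * b) \<noteq> 0}"

definition piZ_rel :: "(real \<times> real \<times> real) rel" where
  "piZ_rel = {((a, b, c), (a', b', c')). (a, b, c) \<in> Reg \<and> (a', b', c') \<in> Reg \<and>
      (\<exists>k l m :: int. a' - a = of_int k * pi \<and> b' - b = of_int l * pi \<and> c' - c = of_int m * pi)}"

definition torus_reg :: "(real \<times> real \<times> real) set topology" where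
  "torus_reg = quot_top (subtopology euclidean Reg) piZ_rel"

definition pm_rel :: "A2 rel" where
  "pm_rel = {(a, b). a \<in> Uset \<and> b \<in> Uset \<and> (b = a \<or> b = - a)}"

definition U_pm :: "A2 set topology" where
  "U_pm = quot_top (subtopology euclidean Uset) pm_rel"

definition psi :: "real \<times> real \<times> real \<Rightarrow> A2" where
  "psi = (\<lambda>(a, b, c). A2mult (A2mult (A2exp (a *\<^sub>R e1)) (A2exp (b *\<^sub>R e12))) (A2exp (c *\<^sub>R e1)))"

definition Psi :: "(real \<times> real \<times> real) set \<Rightarrow> A2 set" where
  "Psi C = pm_rel `` (psi ` C)"

end

theory Submission
  imports Defs "HOL-Homology.Invariance_of_Domain"
begin


lemma vector_4 [simp]:
 "(vector [x,y,z,w] ::('a::zero)^4)$1 = x"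
 "(vector [x,y,z,w] ::('a::zero)^4)$2 = y"
 "(vector [x,y,z,w] ::('a::zero)^4)$3 = z"
 "(vector [x,y,z,w] ::('a::zero)^4)$4 = w"
  unfolding vector_def by simp_all

lemma vec4_eq: "(x::real^4) = y \<longleftrightarrow> x$1 = y$1 \<and> x$2 = y$2 \<and> x$3 = y$3 \<and> x$4 = y$4"
  by (simp add: vec_eq_iff forall_4)

lemma A2mult_comp [simp]:
  "A2mult x y $1 = x$1*y$1 - x$2*y$2 - x$3*y$3 - x$4*y$4"
  "A2mult x y $2 = x$1*y$2 + x$2*y$1 + x$3*y$4 - x$4*y$3"
  "A2mult x y $3 = x$1*y$3 - x$2*y$4 + x$3*y$1 + x$4*y$2"
  "A2mult x y $4 = x$1*y$4 + x$2*y$3 - x$3*y$2 + x$4*y$1"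
  by (simp_all add: A2mult_def)

lemma basis_comp [simp]:
  "A2one$1 = 1" "A2one$2 = 0" "A2one$3 = 0" "A2one$4 = 0"
  "e1$1 = 0" "e1$2 = 1" "e1$3 = 0" "e1$4 = 0"
  "e12$1 = 0" "e12$2 = 0" "e12$3 = 0" "e12$4 = 1"
  "e2$1 = 0" "e2$2 = 0" "e2$3 = 1" "e2$4 = 0"
  by (simp_all add: A2one_def e1_def e2_def e12_def)

definition cc :: "nat \<Rightarrow> real" where "cc m = (if even m then (-1)^(m div 2) else 0)"
definition sc :: "nat \<Rightarrow> real" where "sc m = (if even m then 0 else (-1)^((m - 1) div 2))"

lemma cc_Suc: "cc (Suc m) = - sc m" and sc_Suc: "sc (Suc m) = cc m"
proof -
  show "cc (Suc m) = - sc m"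
  proof (cases "even m")
    case True then show ?thesis by (simp add: cc_def sc_def)
  next
    case False then obtain k where "m = 2*k+1" by (metis oddE)
    then show ?thesis by (simp add: cc_def sc_def)
  qed
  show "sc (Suc m) = cc m"
  proof (cases "even m")
    case True then obtain k where "m = 2*k" by (metis evenE)
    then show ?thesis by (simp add: cc_def sc_def)
  next
    case False then show ?thesis by (simp add: cc_def sc_def)
  qed
qed

lemma A2pow_unit:
  assumes v: "A2mult v v = - A2one" and v1: "A2mult v A2one = v"
  shows "A2pow (t *\<^sub>R v) m = (cc m * t^m) *\<^sub>R A2one + (sc m * t^m) *\<^sub>R v"
proof (induction m)
  case 0 then show ?case by (simp add: cc_def sc_def)
next
  case (Suc m)
  have lin: "A2mult (t *\<^sub>R v) (\<alpha> *\<^sub>R A2one + \<beta> *\<^sub>R v) = (t*\<alpha>) *\<^sub>R A2mult v A2one + (t*\<beta>) *\<^sub>R A2mult v v" for \<alpha> \<beta>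
    by (simp add: vec4_eq algebra_simps)
  show ?case using Suc
    by (simp add: lin v v1 cc_Suc sc_Suc algebra_simps)
qed

lemma A2exp_unit:
  assumes v: "A2mult v v = - A2one" and v1: "A2mult v A2one = v"
  shows "A2exp (t *\<^sub>R v) = cos t *\<^sub>R A2one + sin t *\<^sub>R v"
proof -
  have cco: "cos_coeff m = cc m / fact m" "sin_coeff m = sc m / fact m" for m
    by (simp_all add: cos_coeff_def sin_coeff_def cc_def sc_def)
  have "(\<lambda>m. (cos_coeff m * t^m) *\<^sub>R A2one + (sin_coeff m * t^m) *\<^sub>R v) sums (cos t *\<^sub>R A2one + sin t *\<^sub>R v)"
    by (intro sums_add sums_scaleR_left) (use cos_converges[of t] sin_converges[of t] in auto)
  moreover have "(1 / fact m) *\<^sub>R A2pow (t *\<^sub>R v) m = (cos_coeff m * t^m) *\<^sub>R A2one + (sin_coeff m * t^m) *\<^sub>R v" for m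
    by (simp add: A2pow_unit[OF v v1] cco scaleR_add_right)
  ultimately show ?thesis unfolding A2exp_def by (simp add: sums_iff)
qed

lemma e1_sq: "A2mult e1 e1 = - A2one" "A2mult e1 A2one = e1"
  and e12_sq: "A2mult e12 e12 = - A2one" "A2mult e12 A2one = e12"
  by (simp_all add: vec4_eq)

definition psiv :: "real \<Rightarrow> real \<Rightarrow> real \<Rightarrow> A2" where
  "psiv a b c = vector [cos b * cos (a+ c), cos b * sin (a+ c), sin b * sin (c-a), sin b * cos (a-c)]"

lemma psi_eq: "psi (a,b,c) = psiv a b c"
  unfolding psi_def psiv_def
  by (simp add: A2exp_unit e1_sq e12_sq vec4_eq cos_add sin_add cos_diff sin_diff algebra_simps)



lemma norm_vec4: "norm (u::real^4) = sqrt (u$1^2 + u$2^2 + u$3^2 + u$4^2)"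
  by (simp add: norm_eq_sqrt_inner inner_vec_def sum_4 power2_eq_square)

lemma psiv_comp [simp]:
  "psiv a b c $1 = cos b * cos (a+ c)" "psiv a b c $2 = cos b * sin (a+ c)"
  "psiv a b c $3 = sin b * sin (c-a)" "psiv a b c $4 = sin b * cos (a-c)"
  by (simp_all add: psiv_def)

lemma cos_ac: "cos (a - c) = cos (c - a)" by (metis cos_minus minus_diff_eq)

lemma sq_sum: "((x::real) * cos (t::real))^2 + (x * sin t)^2 = x^2"
proof -
  have "(x * cos t)^2 + (x * sin t)^2 = x^2 * ((sin t)^2 + (cos t)^2)" by (simp only: power_mult_distrib distrib_left add.commute)
  also have "\<dots> = x^2" by (simp only: sin_cos_squared_add mult_1_right)
  finally show ?thesis .
qed

lemma psiv_norm: "norm (psiv a b c) = 1"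
proof -
  have "(cos b * cos (a+ c))^2 + (cos b * sin (a+ c))^2 + (sin b * sin (c-a))^2 + (sin b * cos (a-c))^2
     = ((cos b * cos (a+ c))^2 + (cos b * sin (a+ c))^2) + ((sin b * cos (c-a))^2 + (sin b * sin (c-a))^2)"
    using cos_ac[of a c] by simp
  also have "\<dots> = 1" by (simp only: sq_sum) simp
  finally show ?thesis by (simp add: norm_vec4)
qed

lemma A1_iff: "u \<in> A1 \<longleftrightarrow> u$3 = 0 \<and> u$4 = 0"
proof
  assume "u \<in> A1" then show "u$3 = 0 \<and> u$4 = 0" by (auto simp: A1_def)
next
  assume "u$3 = 0 \<and> u$4 = 0"
  then have "u = (u$1) *\<^sub>R A2one + (u$2) *\<^sub>R e1" by (simp add: vec4_eq)
  then show "u \<in> A1" unfolding A1_def by blast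
qed

lemma A1e2_iff: "u \<in> A1e2 \<longleftrightarrow> u$1 = 0 \<and> u$2 = 0"
proof
  assume "u \<in> A1e2" then show "u$1 = 0 \<and> u$2 = 0" by (auto simp: A1e2_def)
next
  assume "u$1 = 0 \<and> u$2 = 0"
  then have "u = (u$3) *\<^sub>R e2 + (u$4) *\<^sub>R e12" by (simp add: vec4_eq)
  then show "u \<in> A1e2" unfolding A1e2_def by blast
qed

lemma Uset_iff: "u \<in> Uset \<longleftrightarrow> norm u = 1 \<and> (u$1 \<noteq> 0 \<or> u$2 \<noteq> 0) \<and> (u$3 \<noteq> 0 \<or> u$4 \<noteq> 0)"
  by (auto simp: Uset_def A1_iff A1e2_iff)

lemma Uset_uminus: "u \<in> Uset \<Longrightarrow> - u \<in> Uset"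
  by (auto simp: Uset_iff)

lemma sin2_iff: "sin (2*(b::real)) \<noteq> 0 \<longleftrightarrow> sin b \<noteq> 0 \<and> cos b \<noteq> 0"
  by (simp add: sin_double)

lemma psiv_Uset: assumes "sin (2*b) \<noteq> 0" shows "psiv a b c \<in> Uset"
proof -
  have sb: "sin b \<noteq> 0" and cb: "cos b \<noteq> 0" using assms by (auto simp: sin2_iff)
  have "cos (a+ c) \<noteq> 0 \<or> sin (a+ c) \<noteq> 0"
  proof (rule ccontr)
    assume "\<not> ?thesis"
    then have "(sin (a+ c))^2 + (cos (a+ c))^2 = 0" by simp
    then show False by (simp only: sin_cos_squared_add)
  qed
  moreover have "sin (c-a) \<noteq> 0 \<or> cos (a-c) \<noteq> 0"
  proof (rule ccontr)
    assume "\<not> ?thesis"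
    then have "(sin (c-a))^2 + (cos (c-a))^2 = 0" using cos_ac[of a c] by simp
    then show False by (simp only: sin_cos_squared_add)
  qed
  ultimately show ?thesis using sb cb by (auto simp: Uset_iff psiv_norm)
qed

lemma psiv_surj: assumes "u \<in> Uset" shows "\<exists>a b c. sin (2*b) \<noteq> 0 \<and> u = psiv a b c"
proof -
  obtain r1 th where 1: "u$1 = r1 * cos th" "u$2 = r1 * sin th" using polar_Ex by blast
  obtain r2 ph where 2: "u$4 = r2 * cos ph" "- u$3 = r2 * sin ph" using polar_Ex by blast
  have n: "u$1^2 + u$2^2 + u$3^2 + u$4^2 = 1" using assms by (simp add: Uset_iff norm_vec4)
  have "r1^2 + r2^2 = 1"
  proof -
    have "u$1^2 + u$2^2 = r1^2" using 1 sq_sum[of r1 th] by simp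
    moreover have "u$4^2 + u$3^2 = r2^2"
    proof -
      have "u$3^2 = (- u$3)^2" by simp
      then show ?thesis using 2 sq_sum[of r2 ph] by simp
    qed
    ultimately show ?thesis using n by simp
  qed
  then obtain b where b: "r1 = cos b" "r2 = sin b" by (metis sincos_total_2pi)
  have "r1 \<noteq> 0" using assms 1 by (auto simp: Uset_iff)
  moreover have "r2 \<noteq> 0" using assms 2 by (auto simp: Uset_iff)
  ultimately have s: "sin (2*b) \<noteq> 0" using b by (simp add: sin2_iff)
  have "u = psiv ((th+ph)/2) b ((th-ph)/2)"
  proof -
    have e1: "(th+ph)/2 + (th-ph)/2 = th" "(th-ph)/2 - (th+ph)/2 = - ph" "(th+ph)/2 - (th-ph)/2 = ph"
      by (simp_all add: field_simps)
    show ?thesis using 1 2 b by (simp add: vec4_eq e1)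
  qed
  then show ?thesis using s by blast
qed

lemma cos_shift: "cos (x + of_int n * pi) = (if even n then cos x else - cos x)"
  and sin_shift: "sin (x + of_int n * pi) = (if even n then sin x else - sin x)"
  using cos_npi_int[of n] sin_npi_int[of n]
  by (auto simp: cos_add sin_add mult.commute)

lemma psiv_shift:
  fixes k l m :: int
  shows "psiv (a + of_int k * pi) (b + of_int l * pi) (c + of_int m * pi) = psiv a b c \<or>
         psiv (a + of_int k * pi) (b + of_int l * pi) (c + of_int m * pi) = - psiv a b c"
proof -
  have e: "a + of_int k * pi + (c + of_int m * pi) = (a + c) + of_int (k+m) * pi"
          "c + of_int m * pi - (a + of_int k * pi) = (c - a) + of_int (m-k) * pi"
          "a + of_int k * pi - (c + of_int m * pi) = (a - c) + of_int (k-m) * pi"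
    by (simp_all add: algebra_simps)
  have p: "even (m-k) \<longleftrightarrow> even (k+m)" "even (k-m) \<longleftrightarrow> even (k+m)" by presburger+
  show ?thesis
    by (simp only: vec4_eq psiv_comp e cos_shift sin_shift p vector_uminus_component) (auto)
qed

lemma psiv_sigma: "psiv (a + pi/2) (- b) (c + pi/2) = - psiv a b c"
proof -
  have e: "a + pi/2 + (c + pi/2) = (a + c) + pi" "c + pi / 2 - (a + pi / 2) = c - a" "a + pi / 2 - (c + pi / 2) = a - c"
    by (simp_all add: algebra_simps)
  show ?thesis by (simp add: vec4_eq e)
qed

lemma T2:
  assumes s: "s = 1 \<or> s = -1" and c: "cos x = s * cos y" and sn: "sin x = s * sin y"
  shows "\<exists>n::int. x = y + of_int n * pi \<and> (even n \<longleftrightarrow> s = 1)"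
  using s
proof
  assume s1: "s = 1"
  then obtain n :: int where "x = y + 2 * pi * n" using c sn sin_cos_eq_iff by auto
  then show ?thesis using s1 by (intro exI[of _ "2*n"]) auto
next
  assume s1: "s = -1"
  then have "sin x = sin (y + pi) \<and> cos x = cos (y + pi)" using c sn by simp
  then obtain n :: int where "x = y + pi + 2 * pi * n" using sin_cos_eq_iff by blast
  then show ?thesis using s1 by (intro exI[of _ "2*n+1"]) (auto simp: algebra_simps)
qed

lemma sq_eq_pm: "(x::real)^2 = y^2 \<Longrightarrow> \<exists>d. (d = 1 \<or> d = -1) \<and> x = d * y"
  by (metis power2_eq_iff mult_1 mult_minus1)

lemma key:
  assumes hb: "sin (2*b) \<noteq> 0" and hb': "sin (2*b') \<noteq> 0"
    and eps: "e = 1 \<or> e = -1" and eq: "psiv a' b' c' = e *\<^sub>R psiv a b c"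
  shows "(\<exists>k l m::int. a' - a = of_int k * pi \<and> b' - b = of_int l * pi \<and> c' - c = of_int m * pi) \<or>
         (\<exists>k l m::int. a' - (a + pi/2) = of_int k * pi \<and> b' - (- b) = of_int l * pi \<and> c' - (c + pi/2) = of_int m * pi)"
proof -
  have sb: "sin b \<noteq> 0" "cos b \<noteq> 0" using hb by (auto simp: sin2_iff)
  have E1: "cos b' * cos (a'+ c') = e * (cos b * cos (a+ c))"
   and E2: "cos b' * sin (a'+ c') = e * (cos b * sin (a+ c))"
   and E3: "sin b' * sin (c'-a') = e * (sin b * sin (c-a))"
   and E4: "sin b' * cos (a'-c') = e * (sin b * cos (a-c))"
    using eq by (simp_all add: vec4_eq)
  have ee: "e*e = 1" using eps by auto
  have "(cos b')^2 = (cos b)^2"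
  proof -
    have "(cos b')^2 = (cos b' * cos (a'+ c'))^2 + (cos b' * sin (a'+ c'))^2" by (simp add: sq_sum)
    also have "\<dots> = ((e * cos b) * cos (a+ c))^2 + ((e * cos b) * sin (a+ c))^2" using E1 E2 by (simp add: mult.assoc)
    also have "\<dots> = (e * cos b)^2" by (rule sq_sum)
    also have "\<dots> = (cos b)^2" using ee by (simp add: power_mult_distrib power2_eq_square)
    finally show ?thesis .
  qed
  then obtain d where d: "d = 1 \<or> d = -1" "cos b' = d * cos b" using sq_eq_pm by blast
  have "(sin b')^2 = (sin b)^2"
  proof -
    have sc3: "sin (c'-a') = - sin (a'-c')" "sin (c-a) = - sin (a-c)" by (metis minus_diff_eq sin_minus)+
    have "(sin b')^2 = (sin b' * cos (a'-c'))^2 + (sin b' * sin (c'-a'))^2" using sq_sum[of "sin b'" "a'-c'"] sc3 by (simp add: power2_eq_square)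
    also have "\<dots> = ((e * sin b) * cos (a-c))^2 + ((e * sin b) * sin (c-a))^2" using E3 E4 by (simp add: mult.assoc)
    also have "\<dots> = (e * sin b)^2" using sq_sum[of "e * sin b" "a-c"] sc3 by (simp add: power2_eq_square)
    also have "\<dots> = (sin b)^2" using ee by (simp add: power_mult_distrib power2_eq_square)
    finally show ?thesis .
  qed
  then obtain d' where d': "d' = 1 \<or> d' = -1" "sin b' = d' * sin b" using sq_eq_pm by blast
  have ed: "e*d = 1 \<or> e*d = -1" "e*d' = 1 \<or> e*d' = -1" using eps d d' by auto
  have dd: "d*d = 1" "d'*d' = 1" using d d' by auto
  have "cos (a'+ c') = (e*d) * cos (a+ c)"
  proof -
    have "d * cos b * cos (a'+ c') = e * cos b * cos (a+ c)" using E1 d by (simp add: algebra_simps)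
    then have "d * d * cos b * cos (a'+ c') = d * e * cos b * cos (a+ c)" by (metis mult.assoc)
    then show ?thesis using sb dd by (simp add: algebra_simps)
  qed
  moreover have "sin (a'+ c') = (e*d) * sin (a+ c)"
  proof -
    have "d * cos b * sin (a'+ c') = e * cos b * sin (a+ c)" using E2 d by (simp add: algebra_simps)
    then have "d * d * cos b * sin (a'+ c') = d * e * cos b * sin (a+ c)" by (metis mult.assoc)
    then show ?thesis using sb dd by (simp add: algebra_simps)
  qed
  ultimately obtain p :: int where p: "a'+ c' = a+ c + of_int p * pi" "even p \<longleftrightarrow> e*d = 1"
    using T2[OF ed(1)] by blast
  have "cos (a'-c') = (e*d') * cos (a-c)"
  proof -
    have "d' * sin b * cos (a'-c') = e * sin b * cos (a-c)" using E4 d' by (simp add: algebra_simps)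
    then have "d' * d' * sin b * cos (a'-c') = d' * e * sin b * cos (a-c)" by (metis mult.assoc)
    then show ?thesis using sb dd by (simp add: algebra_simps)
  qed
  moreover have "sin (a'-c') = (e*d') * sin (a-c)"
  proof -
    have sc3: "sin (c'-a') = - sin (a'-c')" "sin (c-a) = - sin (a-c)" by (metis minus_diff_eq sin_minus)+
    have "d' * sin b * sin (a'-c') = e * sin b * sin (a-c)" using E3 d' unfolding sc3 by (simp add: algebra_simps)
    then have "d' * d' * sin b * sin (a'-c') = d' * e * sin b * sin (a-c)" by (metis mult.assoc)
    then show ?thesis using sb dd by (simp add: algebra_simps)
  qed
  ultimately obtain p' :: int where p': "a'-c' = a-c + of_int p' * pi" "even p' \<longleftrightarrow> e*d' = 1"
    using T2[OF ed(2)] by blast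
  have aa: "a' - a = of_int (p + p') * pi / 2" using p p' by (simp add: field_simps)
  have cc': "c' - c = of_int (p - p') * pi / 2" using p p' by (simp add: field_simps)
  show ?thesis
  proof (cases "d' = d")
    case True
    then obtain n :: int where n: "b' = b + of_int n * pi" using T2[OF d(1) d(2)] d' by auto
    have "even (p + p')" "even (p - p')" using p(2) p'(2) True by auto
    then obtain k j where kj: "p + p' = 2*k" "p - p' = 2*j" by (metis evenE)
    have "a' - a = of_int k * pi" "c' - c = of_int j * pi" using aa cc' kj by simp_all
    then show ?thesis using n by auto
  next
    case False
    then have d'': "d' = - d" using d d' by auto
    have "cos b' = d * cos (-b)" "sin b' = d * sin (-b)" using d d' d'' by auto
    then obtain n :: int where n: "b' = - b + of_int n * pi" using T2[OF d(1)] by blast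
    have "e*d' = - (e*d)" using d'' by simp
    then have "odd (p + p')" "odd (p - p')" using p(2) p'(2) ed by auto
    then obtain k j where kj: "p + p' = 2*k+1" "p - p' = 2*j+1" by (metis oddE)
    have h: "(2 * of_int k + 1) * pi / 2 = of_int k * pi + pi/2" "(2 * of_int j + 1) * pi / 2 = of_int j * pi + pi/2"
      by (simp_all add: field_simps)
    have "a' - a = (2 * of_int k + 1) * pi / 2" "c' - c = (2 * of_int j + 1) * pi / 2"
      using aa cc' kj by simp_all
    then have "a' - (a + pi/2) = of_int k * pi" "c' - (c + pi/2) = of_int j * pi"
      using h by linarith+
    then show ?thesis using n by auto
  qed
qed



lemma quot_top_open:
  assumes eq: "equiv (topspace X) r"
  shows "openin (quot_top X r) W \<longleftrightarrow> W \<subseteq> topspace X // r \<and> openin X (\<Union>W)"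
proof -
  have "istopology (\<lambda>W. W \<subseteq> topspace X // r \<and> openin X (\<Union>W))"
    unfolding istopology_def
  proof (rule conjI; intro allI impI)
    fix S T assume S: "S \<subseteq> topspace X // r \<and> openin X (\<Union>S)" and T: "T \<subseteq> topspace X // r \<and> openin X (\<Union>T)"
    have "\<Union>(S \<inter> T) = \<Union>S \<inter> \<Union>T"
    proof (rule equalityI)
      show "\<Union>(S \<inter> T) \<subseteq> \<Union>S \<inter> \<Union>T" by blast
      show "\<Union>S \<inter> \<Union>T \<subseteq> \<Union>(S \<inter> T)"
      proof
        fix x assume "x \<in> \<Union>S \<inter> \<Union>T"
        then obtain A B where AB: "A \<in> S" "B \<in> T" "x \<in> A" "x \<in> B" by blast
        then have "A = B" using quotient_disj[OF eq, of A B] S T by blast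
        then show "x \<in> \<Union>(S \<inter> T)" using AB by blast
      qed
    qed
    then show "S \<inter> T \<subseteq> topspace X // r \<and> openin X (\<Union>(S \<inter> T))" using S T by (auto simp del: Union_Int_subset)
  next
    fix K assume K: "\<forall>S\<in>K. S \<subseteq> topspace X // r \<and> openin X (\<Union>S)"
    have "\<Union>(\<Union>K) = \<Union>(Union ` K)" by blast
    moreover have "openin X (\<Union>(Union ` K))" using K by (intro openin_Union) auto
    ultimately show "\<Union>K \<subseteq> topspace X // r \<and> openin X (\<Union>(\<Union>K))" using K by auto
  qed
  then show ?thesis unfolding quot_top_def by simp
qed

lemma quot_top_topspace:
  assumes eq: "equiv (topspace X) r"
  shows "topspace (quot_top X r) = topspace X // r"
proof -
  have "openin (quot_top X r) (topspace X // r)"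
    using quot_top_open[OF eq] Union_quotient[OF eq] by auto
  then have "topspace X // r \<subseteq> topspace (quot_top X r)" by (rule openin_subset)
  moreover have "topspace (quot_top X r) \<subseteq> topspace X // r"
    using quot_top_open[OF eq] openin_topspace by blast
  ultimately show ?thesis by blast
qed

lemma homeo_by_openness:
  assumes im: "f ` topspace X = topspace Y" and inj: "inj_on f (topspace X)"
    and op: "\<And>U. U \<subseteq> topspace X \<Longrightarrow> openin Y (f ` U) \<longleftrightarrow> openin X U"
  shows "homeomorphic_map X Y f"
proof (rule bijective_open_imp_homeomorphic_map[OF _ _ im inj])
  show "open_map X Y f" unfolding open_map_def using op openin_subset by blast
  show "continuous_map X Y f" unfolding continuous_map_def
  proof (intro conjI allI impI)
    show "f \<in> topspace X \<rightarrow> topspace Y" using im by blast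
    fix V assume V: "openin Y V"
    have "f ` {x \<in> topspace X. f x \<in> V} = V" using im openin_subset[OF V] by auto
    then show "openin X {x \<in> topspace X. f x \<in> V}" using op[of "{x \<in> topspace X. f x \<in> V}"] V by auto
  qed
qed



definition psif :: "real \<times> real \<times> real \<Rightarrow> A2" where
  "psif x = psiv (fst x) (fst (snd x)) (snd (snd x))"

lemma psi_psif: "psi = psif"
  by (rule ext) (auto simp: psif_def psi_eq split: prod.splits)

lemma psiv_basis: "psiv a b c = (cos b * cos (a + c)) *\<^sub>R A2one + (cos b * sin (a + c)) *\<^sub>R e1
   + (sin b * sin (c-a)) *\<^sub>R e2 + (sin b * cos (a-c)) *\<^sub>R e12"
  by (simp add: vec4_eq)

lemma psi_cont: "continuous_on S psi"
  unfolding psi_psif psif_def psiv_basis by (intro continuous_intros)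

lemma Reg_iff: "x \<in> Reg \<longleftrightarrow> sin (2 * fst (snd x)) \<noteq> 0"
  by (auto simp: Reg_def split: prod.splits)

lemma open_Reg: "open Reg"
proof -
  have "Reg = {x. sin (2 * fst (snd x)) \<noteq> 0}" by (auto simp: Reg_iff)
  also have "open \<dots>" by (intro open_Collect_neq continuous_intros)
  finally show ?thesis .
qed

definition tr :: "int \<Rightarrow> int \<Rightarrow> int \<Rightarrow> real \<times> real \<times> real" where
  "tr k l m = (of_int k * pi, of_int l * pi, of_int m * pi)"

lemma Reg_shift: "x \<in> Reg \<Longrightarrow> tr k l m + x \<in> Reg"
proof -
  assume x: "x \<in> Reg"
  obtain a b c where xe: "x = (a,b,c)" by (cases x)
  have e: "2 * (of_int l * pi + b) = 2*b + of_int (2*l) * pi" by (simp add: algebra_simps)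
  have "sin (2 * (of_int l * pi + b)) = sin (2*b)" unfolding e sin_shift by simp
  then show ?thesis using x xe by (simp add: Reg_iff tr_def)
qed

lemma piZ_iff: "(x, y) \<in> piZ_rel \<longleftrightarrow> x \<in> Reg \<and> (\<exists>k l m. y = tr k l m + x)"
proof
  assume "(x, y) \<in> piZ_rel"
  then show "x \<in> Reg \<and> (\<exists>k l m. y = tr k l m + x)"
    by (cases x; cases y) (auto simp: piZ_rel_def tr_def algebra_simps)
next
  assume h: "x \<in> Reg \<and> (\<exists>k l m. y = tr k l m + x)"
  then obtain k l m where y: "y = tr k l m + x" by blast
  have "y \<in> Reg" using h y Reg_shift by blast
  then show "(x, y) \<in> piZ_rel" using h y
    by (cases x; cases y) (auto simp: piZ_rel_def tr_def algebra_simps)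
qed

lemma equiv_piZ: "equiv Reg piZ_rel"
proof (rule equivI)
  show "piZ_rel \<subseteq> Reg \<times> Reg" by (auto simp: piZ_rel_def)
  show "refl_on Reg piZ_rel"
  proof (rule refl_onI)
    fix x assume "x \<in> Reg" then show "(x, x) \<in> piZ_rel"
      unfolding piZ_iff by (intro conjI exI[of _ 0]) (auto simp: tr_def zero_prod_def)
  qed
  show "sym piZ_rel"
  proof (rule symI)
    fix x y assume "(x, y) \<in> piZ_rel"
    then obtain k l m where "x \<in> Reg" "y = tr k l m + x" by (auto simp: piZ_iff)
    moreover have "x = tr (-k) (-l) (-m) + (tr k l m + x)" by (simp add: tr_def zero_prod_def)
    ultimately show "(y, x) \<in> piZ_rel" using Reg_shift unfolding piZ_iff by blast
  qed
  show "trans piZ_rel"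
  proof (rule transI)
    fix x y z assume "(x, y) \<in> piZ_rel" "(y, z) \<in> piZ_rel"
    then obtain k l m k' l' m' where "x \<in> Reg" "y = tr k l m + x" "z = tr k' l' m' + y" by (auto simp: piZ_iff)
    moreover have "tr k' l' m' + (tr k l m + x) = tr (k+k') (l+l') (m+m') + x" by (simp add: tr_def algebra_simps)
    ultimately have "x \<in> Reg" "z = tr (k+k') (l+l') (m+m') + x" by simp_all
    then show "(x, z) \<in> piZ_rel" unfolding piZ_iff by blast
  qed
qed

lemma equiv_pm: "equiv Uset pm_rel"
  by (rule equivI) (auto simp: pm_rel_def refl_on_def sym_def trans_def Uset_uminus)

lemma topspace_Reg: "topspace (subtopology euclidean Reg) = Reg" by simp
lemma topspace_Uset: "topspace (subtopology euclidean Uset) = Uset" by simp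

lemma top_torus: "topspace torus_reg = Reg // piZ_rel"
  unfolding torus_reg_def using quot_top_topspace[of "subtopology euclidean Reg"] equiv_piZ by simp

lemma open_torus: "openin torus_reg W \<longleftrightarrow> W \<subseteq> Reg // piZ_rel \<and> open (\<Union>W)"
proof -
  have "openin torus_reg W \<longleftrightarrow> W \<subseteq> Reg // piZ_rel \<and> openin (top_of_set Reg) (\<Union>W)"
    unfolding torus_reg_def using quot_top_open[of "subtopology euclidean Reg"] equiv_piZ by simp
  moreover have "W \<subseteq> Reg // piZ_rel \<Longrightarrow> \<Union>W \<subseteq> Reg" using Union_quotient[OF equiv_piZ] by blast
  ultimately show ?thesis using openin_open_eq[OF open_Reg] by blast
qed

lemma top_Upm: "topspace U_pm = Uset // pm_rel"
  unfolding U_pm_def using quot_top_topspace[of "subtopology euclidean Uset"] equiv_pm by simp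

lemma open_Upm: "openin U_pm W \<longleftrightarrow> W \<subseteq> Uset // pm_rel \<and> openin (top_of_set Uset) (\<Union>W)"
  unfolding U_pm_def using quot_top_open[of "subtopology euclidean Uset"] equiv_pm by simp

lemma qU_eq: "u \<in> Uset \<Longrightarrow> pm_rel `` {u} = {u, -u}"
  unfolding pm_rel_def Image_def using Uset_uminus by blast

lemma qU_eq_iff: "u \<in> Uset \<Longrightarrow> v \<in> Uset \<Longrightarrow> pm_rel `` {u} = pm_rel `` {v} \<longleftrightarrow> v = u \<or> v = - u"
proof -
  assume u: "u \<in> Uset" and v: "v \<in> Uset"
  have "{u, -u} = {v, -v} \<longleftrightarrow> v = u \<or> v = - u"
  proof
    assume "{u, -u} = {v, -v}"
    then have "v \<in> {u, -u}" by blast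
    then show "v = u \<or> v = - u" by blast
  next
    assume "v = u \<or> v = - u"
    then show "{u, -u} = {v, -v}" by auto
  qed
  then show ?thesis using qU_eq[OF u] qU_eq[OF v] by simp
qed

lemma psi_Reg: "x \<in> Reg \<Longrightarrow> psi x \<in> Uset"
proof -
  assume x: "x \<in> Reg"
  obtain a b c where xe: "x = (a,b,c)" by (cases x)
  then show ?thesis using x psiv_Uset[of b a c] by (simp add: psi_eq Reg_iff)
qed

lemma psi_shift: "psi (tr k l m + x) = psi x \<or> psi (tr k l m + x) = - psi x"
proof -
  obtain a b c where x: "x = (a,b,c)" by (cases x)
  have "tr k l m + x = (a + of_int k * pi, b + of_int l * pi, c + of_int m * pi)"
    by (simp add: x tr_def algebra_simps)
  then show ?thesis using psiv_shift[of a k b l c m] by (simp add: x psi_eq)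
qed

lemma Psi_q: assumes "x \<in> Reg" shows "Psi (piZ_rel `` {x}) = pm_rel `` {psi x}"
proof -
  let ?S = "psi ` (piZ_rel `` {x})"
  have A: "\<forall>v\<in>?S. pm_rel `` {v} = pm_rel `` {psi x}"
  proof
    fix v assume "v \<in> ?S"
    then obtain k l m where v: "v = psi (tr k l m + x)" by (auto simp: piZ_iff)
    have u: "psi x \<in> Uset" "- psi x \<in> Uset" using psi_Reg[OF assms] Uset_uminus by auto
    show "pm_rel `` {v} = pm_rel `` {psi x}"
    proof (cases "v = psi x")
      case False
      then have "v = - psi x" using psi_shift[of k l m x] v by blast
      then show ?thesis using qU_eq_iff[OF u(1) u(2)] by simp
    qed simp
  qed
  have B: "psi x \<in> ?S" using equiv_class_self[OF equiv_piZ assms] by blast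
  have "pm_rel `` ?S = (\<Union>v\<in>?S. pm_rel `` {v})" by (rule Image_eq_UN)
  also have "\<dots> = (\<Union>v\<in>?S. pm_rel `` {psi x})" using A by (intro SUP_cong) auto
  also have "\<dots> = pm_rel `` {psi x}" using B by auto
  finally show ?thesis by (simp add: Psi_def)
qed

definition sig :: "real \<times> real \<times> real \<Rightarrow> real \<times> real \<times> real" where
  "sig x = (fst x + pi/2, - fst (snd x), snd (snd x) + pi/2)"

lemma sig_Reg: "x \<in> Reg \<Longrightarrow> sig x \<in> Reg"
  by (simp add: Reg_iff sig_def)

lemma psi_sig: "psi (sig x) = - psi x"
  by (cases x) (simp add: sig_def psi_eq psiv_sigma)

lemma key_psi:
  assumes "x \<in> Reg" "y \<in> Reg" "psi y = psi x \<or> psi y = - psi x"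
  shows "(x, y) \<in> piZ_rel \<or> (sig x, y) \<in> piZ_rel"
proof -
  obtain a b c where x: "x = (a,b,c)" by (cases x)
  obtain a' b' c' where y: "y = (a',b',c')" by (cases y)
  have "\<exists>e. (e = 1 \<or> e = -1) \<and> psiv a' b' c' = e *\<^sub>R psiv a b c"
    using assms(3) x y by (auto simp: psi_eq intro: exI[of _ 1] exI[of _ "-1"])
  then obtain e where e: "e = 1 \<or> e = -1" "psiv a' b' c' = e *\<^sub>R psiv a b c" by blast
  have "sin (2*b) \<noteq> 0" "sin (2*b') \<noteq> 0" using assms x y by (auto simp: Reg_def)
  from key[OF this e] show ?thesis
  proof
    assume "\<exists>k l m::int. a' - a = of_int k * pi \<and> b' - b = of_int l * pi \<and> c' - c = of_int m * pi"
    then obtain k l m :: int where "a' - a = of_int k * pi \<and> b' - b = of_int l * pi \<and> c' - c = of_int m * pi" by blast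
    then have "y = tr k l m + x" using x y by (simp add: tr_def algebra_simps)
    then show ?thesis using assms(1) unfolding piZ_iff by blast
  next
    assume "\<exists>k l m::int. a' - (a + pi/2) = of_int k * pi \<and> b' - (- b) = of_int l * pi \<and> c' - (c + pi/2) = of_int m * pi"
    then obtain k l m :: int where "a' - (a + pi/2) = of_int k * pi \<and> b' - (- b) = of_int l * pi \<and> c' - (c + pi/2) = of_int m * pi" by blast
    then have "y = tr k l m + sig x" using x y by (simp add: tr_def sig_def algebra_simps)
    then show ?thesis using sig_Reg[OF assms(1)] unfolding piZ_iff by blast
  qed
qed



abbreviation qT :: "real \<times> real \<times> real \<Rightarrow> (real \<times> real \<times> real) set" where
  "qT x \<equiv> piZ_rel `` {x}"
abbreviation qU :: "A2 \<Rightarrow> A2 set" where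
  "qU u \<equiv> pm_rel `` {u}"

lemma small_int: assumes "\<bar>of_int k * pi\<bar> < pi/2" shows "k = 0"
proof (rule ccontr)
  assume "k \<noteq> 0"
  then have "1 \<le> \<bar>of_int k :: real\<bar>" by linarith
  then have "pi \<le> \<bar>of_int k\<bar> * pi" using pi_gt_zero by simp
  then show False using assms pi_gt_zero by (simp add: abs_mult)
qed

lemma half_int: assumes "\<bar>t\<bar> < pi/2" shows "t \<noteq> pi/2 + of_int k * pi"
proof
  assume t: "t = pi/2 + of_int k * pi"
  show False
  proof (cases "k \<ge> 0")
    case True
    then have "0 \<le> of_int k * pi" using pi_gt_zero by simp
    then show False using t assms by linarith
  next
    case False
    then have "of_int k \<le> (-1::real)" by linarith
    then have "of_int k * pi \<le> - pi" using pi_gt_zero mult_right_mono[of "of_int k" "-1" pi] by simp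
    then show False using t assms by linarith
  qed
qed

lemma coord_le:
  fixes x y :: "real \<times> real \<times> real"
  shows "\<bar>fst x - fst y\<bar> \<le> dist x y" "\<bar>fst (snd x) - fst (snd y)\<bar> \<le> dist x y"
    "\<bar>snd (snd x) - snd (snd y)\<bar> \<le> dist x y"
proof -
  show "\<bar>fst x - fst y\<bar> \<le> dist x y" using dist_fst_le[of x y] by (simp add: dist_real_def)
  have "dist (snd x) (snd y) \<le> dist x y" by (rule dist_snd_le)
  then show "\<bar>fst (snd x) - fst (snd y)\<bar> \<le> dist x y" "\<bar>snd (snd x) - snd (snd y)\<bar> \<le> dist x y"
    using dist_fst_le[of "snd x" "snd y"] dist_snd_le[of "snd x" "snd y"] by (simp_all add: dist_real_def)
qed

definition good :: "(real \<times> real \<times> real) set \<Rightarrow> bool" where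
  "good N \<longleftrightarrow> open N \<and> N \<subseteq> Reg \<and> (\<forall>x\<in>N. \<forall>y\<in>N. dist x y < pi/2)"

lemma good_pt: assumes "good N" "x \<in> N" shows "x \<in> Reg" "psi x \<in> Uset" "norm (psi x) = 1"
proof -
  show "x \<in> Reg" using assms by (auto simp: good_def)
  then show "psi x \<in> Uset" by (rule psi_Reg)
  then show "norm (psi x) = 1" by (simp add: Uset_iff)
qed

lemma tr0: "tr 0 0 0 = 0" by (simp add: tr_def zero_prod_def)

lemma good_q:
  assumes g: "good N" and xy: "x \<in> N" "y \<in> N" and r: "(x, y) \<in> piZ_rel"
  shows "x = y"
proof -
  obtain k l m where y: "y = tr k l m + x" using r by (auto simp: piZ_iff)
  have d: "dist y x < pi/2" using g xy by (auto simp: good_def)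
  have "k = 0" using coord_le(1)[of y x] d y by (intro small_int) (simp add: tr_def)
  moreover have "l = 0" using coord_le(2)[of y x] d y by (intro small_int) (simp add: tr_def)
  moreover have "m = 0" using coord_le(3)[of y x] d y by (intro small_int) (simp add: tr_def)
  ultimately show ?thesis using y tr0 by simp
qed

lemma good_sig:
  assumes g: "good N" and xy: "x \<in> N" "y \<in> N"
  shows "(sig x, y) \<notin> piZ_rel"
proof
  assume "(sig x, y) \<in> piZ_rel"
  then obtain k l m where y: "y = tr k l m + sig x" by (auto simp: piZ_iff)
  have d: "dist y x < pi/2" using g xy by (auto simp: good_def)
  have "\<bar>fst y - fst x\<bar> < pi/2" using coord_le(1)[of y x] d by linarith
  moreover have "fst y - fst x = pi/2 + of_int k * pi" using y by (simp add: tr_def sig_def)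
  ultimately show False using half_int by blast
qed

lemma good_psi:
  assumes g: "good N" and xy: "x \<in> N" "y \<in> N" and e: "psi y = psi x \<or> psi y = - psi x"
  shows "x = y \<and> psi y = psi x"
proof -
  have R: "x \<in> Reg" "y \<in> Reg" using g xy by (auto simp: good_def)
  have "(x, y) \<in> piZ_rel" using key_psi[OF R e] good_sig[OF g xy] by blast
  then have xy': "x = y" using good_q[OF g xy] by blast
  moreover have "psi y = psi x"
  proof (rule ccontr)
    assume "psi y \<noteq> psi x"
    then have "psi x = - psi x" using e xy' by simp
    then have "psi x + psi x = psi x + - psi x" by (rule arg_cong[where f="\<lambda>t. psi x + t"])
    then have "(2::real) *\<^sub>R psi x = 0" by (simp add: scaleR_2)
    then have "psi x = 0" by simp
    then show False using psi_Reg[OF R(1)] by (simp add: Uset_iff)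
  qed
  ultimately show ?thesis by blast
qed

lemma good_open_psi:
  assumes g: "good N" and N': "N' \<subseteq> N" "open N'"
  shows "openin (top_of_set Uset) (psi ` N')"
proof -
  define h :: "(real \<times> real \<times> real) \<times> real \<Rightarrow> A2" where "h z = snd z *\<^sub>R psi (fst z)" for z
  define S where "S = N' \<times> {0::real<..}"
  have "open S" unfolding S_def using N' by (intro open_Times) auto
  moreover have "continuous_on S h" unfolding h_def
    by (intro continuous_intros continuous_on_compose2[OF psi_cont]) auto
  moreover have "inj_on h S"
  proof (rule inj_onI)
    fix z w assume z: "z \<in> S" and w: "w \<in> S" and hz: "h z = h w"
    have "fst z \<in> N" "fst w \<in> N" using z w N' by (auto simp: S_def)
    then have n: "norm (psi (fst z)) = 1" "norm (psi (fst w)) = 1" using good_pt[OF g] by blast+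
    have "norm (h z) = snd z" "norm (h w) = snd w" using n z w by (auto simp: h_def S_def)
    then have s: "snd z = snd w" using hz by simp
    then have "psi (fst z) = psi (fst w)" using hz z by (auto simp: h_def S_def)
    have "fst z \<in> N" "fst w \<in> N" using z w N' by (auto simp: S_def)
    moreover have "psi (fst w) = psi (fst z)" using \<open>psi (fst z) = psi (fst w)\<close> by simp
    ultimately have "fst z = fst w" using good_psi[OF g, of "fst z" "fst w"] by blast
    then show "z = w" using s by (simp add: prod_eq_iff)
  qed
  moreover have "DIM(A2) \<le> DIM((real \<times> real \<times> real) \<times> real)" by simp
  ultimately have op: "open (h ` S)" by (rule invariance_of_domain_gen)
  have "psi ` N' = Uset \<inter> h ` S"
  proof
    show "psi ` N' \<subseteq> Uset \<inter> h ` S"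
    proof
      fix u assume "u \<in> psi ` N'"
      then obtain x where x: "x \<in> N'" "u = psi x" by blast
      have "u \<in> Uset" using x N' good_pt[OF g, of x] by blast
      moreover have "u = h (x, 1)" using x by (simp add: h_def)
      moreover have "(x, 1) \<in> S" using x by (simp add: S_def)
      ultimately show "u \<in> Uset \<inter> h ` S" by blast
    qed
    show "Uset \<inter> h ` S \<subseteq> psi ` N'"
    proof
      fix u assume u: "u \<in> Uset \<inter> h ` S"
      then obtain z where z: "z \<in> S" "u = h z" by blast
      have "fst z \<in> N" using z N' by (auto simp: S_def)
      then have "norm (psi (fst z)) = 1" using good_pt[OF g] by blast
      then have "norm u = snd z" using z by (auto simp: h_def S_def)
      then have "snd z = 1" using u by (simp add: Uset_iff)
      then have "u = psi (fst z)" using z by (simp add: h_def)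
      then show "u \<in> psi ` N'" using z by (auto simp: S_def)
    qed
  qed
  then show ?thesis using op unfolding openin_open by blast
qed

lemma Union_qT: "\<Union>(qT ` N') = (\<Union>t\<in>(UNIV :: (int \<times> int \<times> int) set). (\<lambda>x. tr (fst t) (fst (snd t)) (snd (snd t)) + x) ` (N' \<inter> Reg))"
proof
  show "\<Union>(qT ` N') \<subseteq> (\<Union>t\<in>UNIV. (\<lambda>x. tr (fst t) (fst (snd t)) (snd (snd t)) + x) ` (N' \<inter> Reg))"
  proof
    fix y assume "y \<in> \<Union>(qT ` N')"
    then obtain x k l m where "x \<in> N'" "x \<in> Reg" "y = tr k l m + x" by (auto simp: piZ_iff)
    then show "y \<in> (\<Union>t\<in>UNIV. (\<lambda>x. tr (fst t) (fst (snd t)) (snd (snd t)) + x) ` (N' \<inter> Reg))"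
      by (intro UN_I[of "(k,l,m)"]) auto
  qed
  show "(\<Union>t\<in>UNIV. (\<lambda>x. tr (fst t) (fst (snd t)) (snd (snd t)) + x) ` (N' \<inter> Reg)) \<subseteq> \<Union>(qT ` N')"
  proof
    fix y assume "y \<in> (\<Union>t\<in>UNIV. (\<lambda>x. tr (fst t) (fst (snd t)) (snd (snd t)) + x) ` (N' \<inter> Reg))"
    then obtain k l m x where "x \<in> N'" "x \<in> Reg" "y = tr k l m + x" by auto
    then have "(x, y) \<in> piZ_rel" unfolding piZ_iff by blast
    then show "y \<in> \<Union>(qT ` N')" using \<open>x \<in> N'\<close> by blast
  qed
qed

lemma good_open_qT:
  assumes g: "good N" and N': "N' \<subseteq> N"
  shows "openin torus_reg (qT ` N') \<longleftrightarrow> open N'"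
proof -
  have sub: "N' \<subseteq> Reg" using g N' by (auto simp: good_def)
  have Q: "qT ` N' \<subseteq> Reg // piZ_rel" using sub by (auto intro: quotientI)
  have "open (\<Union>(qT ` N')) \<longleftrightarrow> open N'"
  proof
    assume "open N'"
    then show "open (\<Union>(qT ` N'))" unfolding Union_qT
      by (intro open_UN ballI open_translation) (use sub in \<open>simp add: Int_absorb2\<close>)
  next
    assume op: "open (\<Union>(qT ` N'))"
    have "N' = \<Union>(qT ` N') \<inter> N"
    proof
      show "N' \<subseteq> \<Union>(qT ` N') \<inter> N" using N' sub equiv_class_self[OF equiv_piZ] by blast
      show "\<Union>(qT ` N') \<inter> N \<subseteq> N'"
      proof
        fix y assume "y \<in> \<Union>(qT ` N') \<inter> N"
        then obtain x where "x \<in> N'" "(x, y) \<in> piZ_rel" "y \<in> N" by blast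
        then show "y \<in> N'" using good_q[OF g, of x y] N' by blast
      qed
    qed
    then show "open N'" using op g by (metis good_def open_Int)
  qed
  then show ?thesis using Q by (simp add: open_torus)
qed

lemma Union_qU: assumes "P \<subseteq> Uset" shows "\<Union>(qU ` P) = P \<union> uminus ` P"
proof -
  have "qU ` P = (\<lambda>u. {u, -u}) ` P" using assms qU_eq by (intro image_cong) auto
  then show ?thesis by auto
qed

lemma openin_Uset_neg:
  assumes "openin (top_of_set Uset) P" shows "openin (top_of_set Uset) (uminus ` P)"
proof -
  obtain G where G: "open G" "P = Uset \<inter> G" using assms unfolding openin_open by blast
  have "uminus ` P = Uset \<inter> uminus ` G"
  proof
    show "uminus ` P \<subseteq> Uset \<inter> uminus ` G" using G Uset_uminus by auto
    show "Uset \<inter> uminus ` G \<subseteq> uminus ` P"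
    proof
      fix v assume v: "v \<in> Uset \<inter> uminus ` G"
      then obtain g where gg: "g \<in> G" "v = - g" by blast
      have "- v \<in> Uset" using v Uset_uminus by blast
      then have "- v \<in> P" using gg G by simp
      then show "v \<in> uminus ` P" by (metis image_eqI minus_minus)
    qed
  qed
  moreover have "open (uminus ` G)" using G open_negations by blast
  ultimately show ?thesis unfolding openin_open by blast
qed

lemma good_open_qU:
  assumes g: "good N" and N': "N' \<subseteq> N"
  shows "openin U_pm (qU ` (psi ` N')) \<longleftrightarrow> open N'"
proof -
  have sub: "N' \<subseteq> Reg" using g N' by (auto simp: good_def)
  have PU: "psi ` N' \<subseteq> Uset" using sub psi_Reg by blast
  have Q: "qU ` (psi ` N') \<subseteq> Uset // pm_rel"
  proof
    fix C assume "C \<in> qU ` (psi ` N')"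
    then obtain u where "u \<in> psi ` N'" "C = qU u" by blast
    then show "C \<in> Uset // pm_rel" using PU by (auto intro: quotientI)
  qed
  have IFF: "openin (top_of_set Uset) (psi ` N' \<union> uminus ` (psi ` N')) \<longleftrightarrow> open N'"
  proof
    assume "open N'"
    then have "openin (top_of_set Uset) (psi ` N')" using good_open_psi[OF g N'] by blast
    then show "openin (top_of_set Uset) (psi ` N' \<union> uminus ` (psi ` N'))"
      using openin_Uset_neg by blast
  next
    assume op: "openin (top_of_set Uset) (psi ` N' \<union> uminus ` (psi ` N'))"
    have opO: "openin (top_of_set Uset) (psi ` N)" using good_open_psi[OF g] g by (auto simp: good_def)
    have "psi ` N' = (psi ` N' \<union> uminus ` (psi ` N')) \<inter> psi ` N"
    proof
      show "psi ` N' \<subseteq> (psi ` N' \<union> uminus ` (psi ` N')) \<inter> psi ` N" using N' by blast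
      show "(psi ` N' \<union> uminus ` (psi ` N')) \<inter> psi ` N \<subseteq> psi ` N'"
      proof
        fix u assume u: "u \<in> (psi ` N' \<union> uminus ` (psi ` N')) \<inter> psi ` N"
        then obtain y where y: "y \<in> N" "u = psi y" by blast
        show "u \<in> psi ` N'"
        proof (cases "u \<in> psi ` N'")
          case False
          then obtain x where x: "x \<in> N'" "u = - psi x" using u by blast
          then have "psi y = - psi x" using y by simp
          then have "psi y = psi x" using good_psi[OF g, of x y] x y N' by blast
          then show ?thesis using x y by simp
        qed simp
      qed
    qed
    then have opP: "openin (top_of_set Uset) (psi ` N')" using op opO by (metis openin_Int)
    then obtain G where G: "open G" "psi ` N' = Uset \<inter> G" unfolding openin_open by blast
    have "N' = N \<inter> psi -` G"
    proof
      show "N' \<subseteq> N \<inter> psi -` G" using N' G by blast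
      show "N \<inter> psi -` G \<subseteq> N'"
      proof
        fix x assume x: "x \<in> N \<inter> psi -` G"
        have "x \<in> Reg" using x g by (auto simp: good_def)
        then have "psi x \<in> Uset" by (rule psi_Reg)
        then have "psi x \<in> psi ` N'" using x G by blast
        then obtain x' where "x' \<in> N'" "psi x = psi x'" by blast
        then show "x \<in> N'" using good_psi[OF g, of x' x] x N' by auto
      qed
    qed
    moreover have "open (N \<inter> psi -` G)" using g G by (intro continuous_open_preimage psi_cont) (auto simp: good_def)
    ultimately show "open N'" by simp
  qed
  show ?thesis unfolding open_Upm Union_qU[OF PU] using Q IFF by blast
qed

lemma good_homeo:
  assumes g: "good N"
  shows "homeomorphic_map (subtopology torus_reg (qT ` N)) (subtopology U_pm (qU ` (psi ` N))) Psi"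
proof -
  have sub: "N \<subseteq> Reg" using g by (auto simp: good_def)
  have "qT ` N \<subseteq> Reg // piZ_rel"
  proof
    fix C assume "C \<in> qT ` N"
    then obtain x where "x \<in> N" "C = qT x" by blast
    then show "C \<in> Reg // piZ_rel" using sub by (auto intro: quotientI)
  qed
  then have t1: "topspace (subtopology torus_reg (qT ` N)) = qT ` N"
    by (simp add: top_torus Int_absorb1)
  have "qU ` (psi ` N) \<subseteq> Uset // pm_rel"
  proof
    fix C assume "C \<in> qU ` (psi ` N)"
    then obtain x where "x \<in> N" "C = qU (psi x)" by blast
    then have "psi x \<in> Uset" using good_pt[OF g] by blast
    then show "C \<in> Uset // pm_rel" using \<open>C = qU (psi x)\<close> by (auto intro: quotientI)
  qed
  then have t2: "topspace (subtopology U_pm (qU ` (psi ` N))) = qU ` (psi ` N)"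
    by (simp add: top_Upm Int_absorb1)
  have im: "Psi ` (qT ` N') = qU ` (psi ` N')" if "N' \<subseteq> N" for N'
  proof -
    have "Psi ` (qT ` N') = (\<lambda>x. Psi (qT x)) ` N'" by (simp only: image_image)
    also have "\<dots> = (\<lambda>x. qU (psi x)) ` N'"
    proof (rule image_cong)
      fix x assume "x \<in> N'"
      then have "x \<in> Reg" using that sub by blast
      then show "Psi (qT x) = qU (psi x)" by (rule Psi_q)
    qed simp
    also have "\<dots> = qU ` (psi ` N')" by (simp only: image_image)
    finally show ?thesis .
  qed
  have opT: "openin torus_reg (qT ` N)" using good_open_qT[OF g] g by (auto simp: good_def)
  have opU: "openin U_pm (qU ` (psi ` N))" using good_open_qU[OF g] g by (auto simp: good_def)
  show ?thesis
  proof (rule homeo_by_openness)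
    show "Psi ` topspace (subtopology torus_reg (qT ` N)) = topspace (subtopology U_pm (qU ` (psi ` N)))"
      unfolding t1 t2 by (rule im) simp
    show "inj_on Psi (topspace (subtopology torus_reg (qT ` N)))"
      unfolding t1
    proof (rule inj_onI)
      fix C D assume C: "C \<in> qT ` N" and D: "D \<in> qT ` N" and e: "Psi C = Psi D"
      obtain x y where xy: "x \<in> N" "y \<in> N" "C = qT x" "D = qT y" using C D by blast
      have R: "x \<in> Reg" "y \<in> Reg" using sub xy by blast+
      have "Psi (qT x) = qU (psi x)" "Psi (qT y) = qU (psi y)" using Psi_q R by blast+
      moreover have "Psi (qT x) = Psi (qT y)" using e xy(3,4) by (simp only:)
      ultimately have "qU (psi x) = qU (psi y)" by (simp only:)
      then have "psi y = psi x \<or> psi y = - psi x" by (rule iffD1[OF qU_eq_iff[OF psi_Reg[OF R(1)] psi_Reg[OF R(2)]]])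
      then have "x = y" using good_psi[OF g xy(1,2)] by blast
      then show "C = D" using xy(3,4) by (simp only:)
    qed
    fix U assume U: "U \<subseteq> topspace (subtopology torus_reg (qT ` N))"
    define N' where "N' = {x \<in> N. qT x \<in> U}"
    have N'N: "N' \<subseteq> N" unfolding N'_def by blast
    have UO: "U = qT ` N'"
    proof
      show "U \<subseteq> qT ` N'"
      proof
        fix C assume "C \<in> U"
        then have "C \<in> qT ` N" using U t1 by blast
        then obtain x where "x \<in> N" "C = qT x" by blast
        then show "C \<in> qT ` N'" using \<open>C \<in> U\<close> unfolding N'_def by blast
      qed
      show "qT ` N' \<subseteq> U" unfolding N'_def by blast
    qed
    have s1: "U \<subseteq> qT ` N" using UO N'N by blast
    have PU: "Psi ` U = qU ` (psi ` N')" using UO im[OF N'N] by simp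
    have s2: "Psi ` U \<subseteq> qU ` (psi ` N)" unfolding PU using N'N by blast
    have A: "openin (subtopology torus_reg (qT ` N)) U \<longleftrightarrow> openin torus_reg U"
      using openin_open_subtopology[OF opT, of U] s1 by blast
    have B: "openin torus_reg U \<longleftrightarrow> open N'" using good_open_qT[OF g N'N] UO by (simp only:)
    have C: "openin (subtopology U_pm (qU ` (psi ` N))) (Psi ` U) \<longleftrightarrow> openin U_pm (Psi ` U)"
      using openin_open_subtopology[OF opU, of "Psi ` U"] s2 by blast
    have D: "openin U_pm (Psi ` U) \<longleftrightarrow> open N'" using good_open_qU[OF g N'N] PU by (simp only:)
    have "openin (subtopology torus_reg (qT ` N)) U \<longleftrightarrow> open N'" using A B by simp
    moreover have "openin (subtopology U_pm (qU ` (psi ` N))) (Psi ` U) \<longleftrightarrow> open N'" using C D by simp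
    ultimately show "openin (subtopology U_pm (qU ` (psi ` N))) (Psi ` U) \<longleftrightarrow> openin (subtopology torus_reg (qT ` N)) U"
      by simp
  qed
qed



lemma qT_sig_neq: assumes x: "x \<in> Reg" shows "qT x \<noteq> qT (sig x)"
proof
  assume e: "qT x = qT (sig x)"
  have "(x, sig x) \<in> piZ_rel"
    using equiv_class_eq_iff[OF equiv_piZ, of x "sig x"] e x sig_Reg[OF x] by blast
  then obtain k l m where s: "sig x = tr k l m + x" by (auto simp: piZ_iff)
  then have "fst (sig x) = fst (tr k l m + x)" by simp
  then have "pi/2 = of_int k * pi" by (simp add: sig_def tr_def)
  then have "(0::real) = pi/2 + of_int (-k) * pi" by simp
  moreover have "\<bar>0::real\<bar> < pi/2" by simp
  ultimately show False using half_int by blast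
qed

lemma Psi_sig: assumes x: "x \<in> Reg" shows "Psi (qT (sig x)) = Psi (qT x)"
proof -
  have "Psi (qT (sig x)) = qU (psi (sig x))" by (rule Psi_q[OF sig_Reg[OF x]])
  also have "\<dots> = qU (- psi x)" by (simp only: psi_sig)
  also have "\<dots> = qU (psi x)"
    using qU_eq_iff[OF psi_Reg[OF x] Uset_uminus[OF psi_Reg[OF x]]] by blast
  also have "\<dots> = Psi (qT x)" by (rule Psi_q[OF x, symmetric])
  finally show ?thesis .
qed

lemma fiber:
  assumes x: "x \<in> Reg"
  shows "{C \<in> topspace torus_reg. Psi C = Psi (qT x)} = {qT x, qT (sig x)}"
proof
  show "{C \<in> topspace torus_reg. Psi C = Psi (qT x)} \<subseteq> {qT x, qT (sig x)}"
  proof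
    fix C assume C: "C \<in> {C \<in> topspace torus_reg. Psi C = Psi (qT x)}"
    then have "C \<in> Reg // piZ_rel" by (simp add: top_torus)
    then obtain y where y: "y \<in> Reg" "C = qT y" by (rule quotientE) blast
    have "Psi (qT y) = Psi (qT x)" using C y by simp
    then have "qU (psi y) = qU (psi x)" by (simp only: Psi_q[OF x] Psi_q[OF y(1)])
    then have "psi y = psi x \<or> psi y = - psi x"
      by (rule iffD1[OF qU_eq_iff[OF psi_Reg[OF x] psi_Reg[OF y(1)]], OF sym])
    then have "(x, y) \<in> piZ_rel \<or> (sig x, y) \<in> piZ_rel" by (rule key_psi[OF x y(1)])
    then show "C \<in> {qT x, qT (sig x)}"
    proof
      assume "(x, y) \<in> piZ_rel"
      then have "qT x = qT y" by (rule equiv_class_eq[OF equiv_piZ])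
      then show ?thesis using y by simp
    next
      assume "(sig x, y) \<in> piZ_rel"
      then have "qT (sig x) = qT y" by (rule equiv_class_eq[OF equiv_piZ])
      then show ?thesis using y by simp
    qed
  qed
  show "{qT x, qT (sig x)} \<subseteq> {C \<in> topspace torus_reg. Psi C = Psi (qT x)}"
  proof -
    have "qT x \<in> topspace torus_reg" "qT (sig x) \<in> topspace torus_reg"
      using x sig_Reg[OF x] by (simp_all add: top_torus quotientI)
    then show ?thesis using Psi_sig[OF x] by blast
  qed
qed

lemma cont_Psi: "continuous_map torus_reg U_pm Psi"
  unfolding continuous_map_def
proof (intro conjI allI impI)
  show "Psi \<in> topspace torus_reg \<rightarrow> topspace U_pm"
  proof
    fix C assume "C \<in> topspace torus_reg"
    then have "C \<in> Reg // piZ_rel" by (simp add: top_torus)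
    then obtain x where x: "x \<in> Reg" "C = qT x" by (rule quotientE) blast
    have "Psi C = qU (psi x)" using Psi_q[OF x(1)] x(2) by simp
    then show "Psi C \<in> topspace U_pm" using psi_Reg[OF x(1)] by (simp add: top_Upm quotientI)
  qed
  fix V assume V: "openin U_pm V"
  then have VQ: "V \<subseteq> Uset // pm_rel" and VO: "openin (top_of_set Uset) (\<Union>V)" by (simp_all add: open_Upm)
  obtain G where G: "open G" "\<Union>V = Uset \<inter> G" using VO unfolding openin_open by blast
  let ?W = "{C \<in> topspace torus_reg. Psi C \<in> V}"
  have WQ: "?W \<subseteq> Reg // piZ_rel" by (auto simp: top_torus)
  have "\<Union>?W = Reg \<inter> psi -` G"
  proof
    show "\<Union>?W \<subseteq> Reg \<inter> psi -` G"
    proof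
      fix z assume "z \<in> \<Union>?W"
      then obtain C where C: "C \<in> ?W" "z \<in> C" by blast
      then have "C \<in> Reg // piZ_rel" by (simp add: top_torus)
      then obtain x where x: "x \<in> Reg" "C = qT x" by (rule quotientE) blast
      have xz: "(x, z) \<in> piZ_rel" using C x by simp
      then have z: "z \<in> Reg" using equiv_piZ by (auto simp: equiv_def)
      have "qT z = qT x" using equiv_class_eq[OF equiv_piZ xz] by simp
      then have "Psi (qT z) \<in> V" using C x by simp
      then have "qU (psi z) \<in> V" by (simp only: Psi_q[OF z])
      moreover have "psi z \<in> qU (psi z)" by (rule equiv_class_self[OF equiv_pm psi_Reg[OF z]])
      ultimately have "psi z \<in> \<Union>V" by blast
      then show "z \<in> Reg \<inter> psi -` G" using G z by blast
    qed
    show "Reg \<inter> psi -` G \<subseteq> \<Union>?W"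
    proof
      fix z assume z: "z \<in> Reg \<inter> psi -` G"
      then have zR: "z \<in> Reg" by blast
      have "psi z \<in> \<Union>V" using G z psi_Reg[OF zR] by blast
      then obtain D where D: "D \<in> V" "psi z \<in> D" by blast
      then have "D \<in> Uset // pm_rel" using VQ by blast
      then obtain w where w: "w \<in> Uset" "D = qU w" by (rule quotientE) blast
      have "(w, psi z) \<in> pm_rel" using D w by simp
      then have "qU w = qU (psi z)" by (rule equiv_class_eq[OF equiv_pm])
      then have "Psi (qT z) \<in> V" using D w Psi_q[OF zR] by simp
      moreover have "qT z \<in> topspace torus_reg" using zR by (simp add: top_torus quotientI)
      moreover have "z \<in> qT z" by (rule equiv_class_self[OF equiv_piZ zR])
      ultimately show "z \<in> \<Union>?W" by blast
    qed
  qed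
  moreover have "open (Reg \<inter> psi -` G)" by (rule continuous_open_preimage[OF psi_cont open_Reg G(1)])
  ultimately show "openin torus_reg ?W" using WQ by (simp add: open_torus)
qed

lemma Psi_surj: "Psi ` topspace torus_reg = topspace U_pm"
proof
  show "Psi ` topspace torus_reg \<subseteq> topspace U_pm"
    using cont_Psi unfolding continuous_map_def by blast
  show "topspace U_pm \<subseteq> Psi ` topspace torus_reg"
  proof
    fix y assume "y \<in> topspace U_pm"
    then have "y \<in> Uset // pm_rel" by (simp add: top_Upm)
    then obtain u where u: "u \<in> Uset" "y = qU u" by (rule quotientE) blast
    obtain a b c where abc: "sin (2*b) \<noteq> 0" "u = psiv a b c" using psiv_surj[OF u(1)] by blast
    have xR: "(a,b,c) \<in> Reg" using abc by (simp add: Reg_iff)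
    have "y = Psi (qT (a,b,c))" using u abc Psi_q[OF xR] by (simp add: psi_eq)
    moreover have "qT (a,b,c) \<in> topspace torus_reg" using xR by (simp add: top_torus quotientI)
    ultimately show "y \<in> Psi ` topspace torus_reg" by blast
  qed
qed

lemma dist_sig: "dist (sig x) (sig y) = dist x y"
proof -
  obtain a b c where x: "x = (a,b,c)" by (cases x)
  obtain a' b' c' where y: "y = (a',b',c')" by (cases y)
  show ?thesis using x y by (simp add: sig_def dist_Pair_Pair dist_real_def abs_minus_commute)
qed

lemma good_sig_img: assumes g: "good B" shows "good (sig ` B)"
proof -
  define si where "si x = (fst x - pi/2, - fst (snd x), snd (snd x) - pi/2)" for x :: "real \<times> real \<times> real"
  have "sig ` B = UNIV \<inter> si -` B"
  proof
    show "sig ` B \<subseteq> UNIV \<inter> si -` B" by (auto simp: si_def sig_def)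
    show "UNIV \<inter> si -` B \<subseteq> sig ` B"
    proof
      fix y assume "y \<in> UNIV \<inter> si -` B"
      then have "si y \<in> B" by blast
      moreover have "y = sig (si y)" by (simp add: si_def sig_def)
      ultimately show "y \<in> sig ` B" by blast
    qed
  qed
  moreover have "open (UNIV \<inter> si -` B)"
    using g unfolding good_def si_def by (intro continuous_open_preimage continuous_intros) auto
  ultimately have "open (sig ` B)" by simp
  moreover have "sig ` B \<subseteq> Reg" using g sig_Reg by (auto simp: good_def)
  moreover have "\<forall>x\<in>sig ` B. \<forall>y\<in>sig ` B. dist x y < pi/2" using g by (auto simp: good_def dist_sig)
  ultimately show ?thesis by (simp add: good_def)
qed

lemma good_ball: assumes x0: "x0 \<in> Reg" shows "\<exists>r>0. good (ball x0 r)"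
proof -
  obtain e where e: "e > 0" "ball x0 e \<subseteq> Reg" using open_Reg x0 open_contains_ball by blast
  define r where "r = min e (pi/4)"
  have r: "r > 0" "r \<le> e" "r \<le> pi/4" using e pi_gt_zero by (auto simp: r_def)
  have "\<forall>x\<in>ball x0 r. \<forall>y\<in>ball x0 r. dist x y < pi/2"
  proof (intro ballI)
    fix x y assume "x \<in> ball x0 r" "y \<in> ball x0 r"
    then have "dist x0 x < r" "dist x0 y < r" by auto
    moreover have "dist x y \<le> dist x0 x + dist x0 y" by (metis dist_commute dist_triangle)
    ultimately show "dist x y < pi/2" using r by linarith
  qed
  moreover have "ball x0 r \<subseteq> Reg" using e r by auto
  ultimately show ?thesis using r by (intro exI[of _ r]) (simp add: good_def)
qed



lemma local_triv:
  assumes yT: "y \<in> topspace U_pm"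
  shows "\<exists>T. y \<in> T \<and> openin U_pm T \<and>
        (\<exists>V. \<Union>V = {x \<in> topspace torus_reg. Psi x \<in> T} \<and>
             (\<forall>u \<in> V. openin torus_reg u) \<and> pairwise disjnt V \<and>
             (\<forall>u \<in> V. homeomorphic_map (subtopology torus_reg u) (subtopology U_pm T) Psi))"
proof -
  obtain C0 where C0: "C0 \<in> topspace torus_reg" "y = Psi C0" using yT Psi_surj by blast
  then have "C0 \<in> Reg // piZ_rel" by (simp add: top_torus)
  then obtain x0 where x0: "x0 \<in> Reg" "C0 = qT x0" by (rule quotientE) blast
  obtain r where r: "r > 0" "good (ball x0 r)" using good_ball[OF x0(1)] by blast
  define B where "B = ball x0 r"
  have gB: "good B" using r by (simp add: B_def)
  define B' where "B' = sig ` B"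
  have gB': "good B'" unfolding B'_def by (rule good_sig_img[OF gB])
  have BR: "B \<subseteq> Reg" using gB by (simp add: good_def)
  define T where "T = qU ` (psi ` B)"
  have x0B: "x0 \<in> B" using r by (simp add: B_def)
  have yeq: "y = qU (psi x0)" using C0 x0 Psi_q[OF x0(1)] by simp
  have yinT: "y \<in> T" unfolding T_def yeq using x0B by blast
  have opT: "openin U_pm T" unfolding T_def using good_open_qU[OF gB subset_refl] gB by (simp add: good_def)
  have T': "qU ` (psi ` B') = T"
  proof -
    have "qU ` (psi ` B') = (\<lambda>x. qU (psi (sig x))) ` B" unfolding B'_def by (simp only: image_image)
    also have "\<dots> = (\<lambda>x. qU (psi x)) ` B"
    proof (rule image_cong)
      fix x assume "x \<in> B"
      then have xR: "x \<in> Reg" using BR by blast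
      have "qU (psi (sig x)) = Psi (qT (sig x))" by (rule Psi_q[OF sig_Reg[OF xR], symmetric])
      also have "\<dots> = Psi (qT x)" by (rule Psi_sig[OF xR])
      also have "\<dots> = qU (psi x)" by (rule Psi_q[OF xR])
      finally show "qU (psi (sig x)) = qU (psi x)" .
    qed simp
    also have "\<dots> = T" unfolding T_def by (simp only: image_image)
    finally show ?thesis .
  qed
  define V where "V = {qT ` B, qT ` B'}"
  have UV: "\<Union>V = {x \<in> topspace torus_reg. Psi x \<in> T}"
  proof
    show "\<Union>V \<subseteq> {x \<in> topspace torus_reg. Psi x \<in> T}"
    proof
      fix C assume "C \<in> \<Union>V"
      then have "C \<in> qT ` B \<or> C \<in> qT ` B'" by (simp add: V_def)
      then obtain z where z: "z \<in> B" "C = qT z \<or> C = qT (sig z)" unfolding B'_def by blast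
      have zR: "z \<in> Reg" using z BR by blast
      have "Psi C = Psi (qT z)" using z Psi_sig[OF zR] by blast
      then have "Psi C = qU (psi z)" using Psi_q[OF zR] by simp
      then have "Psi C \<in> T" unfolding T_def using z by blast
      moreover have "C \<in> topspace torus_reg"
        using z zR sig_Reg[OF zR] by (auto simp: top_torus quotientI)
      ultimately show "C \<in> {x \<in> topspace torus_reg. Psi x \<in> T}" by blast
    qed
    show "{x \<in> topspace torus_reg. Psi x \<in> T} \<subseteq> \<Union>V"
    proof
      fix C assume C: "C \<in> {x \<in> topspace torus_reg. Psi x \<in> T}"
      then have "C \<in> Reg // piZ_rel" by (simp add: top_torus)
      then obtain x where x: "x \<in> Reg" "C = qT x" by (rule quotientE) blast
      have "Psi C \<in> T" using C by blast
      then obtain z where z: "z \<in> B" "Psi C = qU (psi z)" unfolding T_def by blast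
      have zR: "z \<in> Reg" using z BR by blast
      have "qU (psi z) = qU (psi x)" using z x Psi_q[OF x(1)] by simp
      then have "psi x = psi z \<or> psi x = - psi z"
        by (rule iffD1[OF qU_eq_iff[OF psi_Reg[OF zR] psi_Reg[OF x(1)]]])
      then have "(z, x) \<in> piZ_rel \<or> (sig z, x) \<in> piZ_rel" by (rule key_psi[OF zR x(1)])
      then show "C \<in> \<Union>V"
      proof
        assume "(z, x) \<in> piZ_rel"
        then have "qT z = C" using equiv_class_eq[OF equiv_piZ] x by simp
        then show ?thesis using z unfolding V_def by blast
      next
        assume "(sig z, x) \<in> piZ_rel"
        then have "qT (sig z) = C" using equiv_class_eq[OF equiv_piZ] x by simp
        moreover have "sig z \<in> B'" using z unfolding B'_def by blast
        ultimately show ?thesis unfolding V_def by blast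
      qed
    qed
  qed
  have opV: "\<forall>u \<in> V. openin torus_reg u"
    using good_open_qT[OF gB subset_refl] good_open_qT[OF gB' subset_refl] gB gB'
    by (simp add: V_def good_def)
  have dj: "disjnt (qT ` B) (qT ` B')"
    unfolding disjnt_def
  proof (rule equals0I)
    fix C assume "C \<in> qT ` B \<inter> qT ` B'"
    then obtain z z' where zz: "z \<in> B" "z' \<in> B" "C = qT z" "C = qT (sig z')" unfolding B'_def by blast
    have R: "z \<in> Reg" "sig z' \<in> Reg" using zz BR sig_Reg by blast+
    have "qT (sig z') = qT z" using zz by simp
    then have "(sig z', z) \<in> piZ_rel" using equiv_class_eq_iff[OF equiv_piZ, of "sig z'" z] R by blast
    then show False using good_sig[OF gB zz(2) zz(1)] by blast
  qed
  have pw: "pairwise disjnt V"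
    unfolding V_def using dj disjnt_sym by (auto simp: pairwise_insert)
  have hm: "\<forall>u \<in> V. homeomorphic_map (subtopology torus_reg u) (subtopology U_pm T) Psi"
    using good_homeo[OF gB] good_homeo[OF gB'] T' unfolding V_def T_def by auto
  show ?thesis using yinT opT UV opV pw hm by blast
qed

theorem proposition4p7:
  shows "two_fold_covering_map torus_reg U_pm Psi \<and>
    (\<forall>a b c. sin (2 * b) \<noteq> 0 \<longrightarrow>
       {C \<in> topspace torus_reg. Psi C = Psi (piZ_rel `` {(a, b, c)})} =
       {piZ_rel `` {(a, b, c)}, piZ_rel `` {(a + pi / 2, - b, c + pi / 2)}})"
proof (intro conjI allI impI)
  have card: "card {x \<in> topspace torus_reg. Psi x = y} = 2" if y: "y \<in> topspace U_pm" for y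
  proof -
    obtain C0 where C0: "C0 \<in> topspace torus_reg" "y = Psi C0" using y Psi_surj by blast
    then have "C0 \<in> Reg // piZ_rel" by (simp add: top_torus)
    then obtain x0 where x0: "x0 \<in> Reg" "C0 = qT x0" by (rule quotientE) blast
    have "{x \<in> topspace torus_reg. Psi x = y} = {qT x0, qT (sig x0)}"
      using fiber[OF x0(1)] C0 x0 by simp
    then show ?thesis using qT_sig_neq[OF x0(1)] by simp
  qed
  have cov: "covering_map torus_reg U_pm Psi"
    unfolding covering_map_def
  proof (intro conjI ballI)
    show "continuous_map torus_reg U_pm Psi" by (rule cont_Psi)
    show "Psi ` topspace torus_reg = topspace U_pm" by (rule Psi_surj)
    fix y assume "y \<in> topspace U_pm"
    then show "\<exists>T. y \<in> T \<and> openin U_pm T \<and>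
        (\<exists>V. \<Union>V = {x \<in> topspace torus_reg. Psi x \<in> T} \<and>
             (\<forall>u \<in> V. openin torus_reg u) \<and> pairwise disjnt V \<and>
             (\<forall>u \<in> V. homeomorphic_map (subtopology torus_reg u) (subtopology U_pm T) Psi))"
      by (rule local_triv)
  qed
  show "two_fold_covering_map torus_reg U_pm Psi"
    unfolding two_fold_covering_map_def
  proof (intro conjI ballI)
    show "covering_map torus_reg U_pm Psi" by (rule cov)
    fix y assume "y \<in> topspace U_pm"
    then show "card {x \<in> topspace torus_reg. Psi x = y} = 2" by (rule card)
  qed
next
  fix a b c :: real assume "sin (2 * b) \<noteq> 0"
  then have xR: "(a, b, c) \<in> Reg" by (simp add: Reg_iff)
  have "sig (a, b, c) = (a + pi / 2, - b, c + pi / 2)" by (simp add: sig_def)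
  then show "{C \<in> topspace torus_reg. Psi C = Psi (piZ_rel `` {(a, b, c)})} =
       {piZ_rel `` {(a, b, c)}, piZ_rel `` {(a + pi / 2, - b, c + pi / 2)}}"
    using fiber[OF xR] by simp
qed

end
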